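(* Let $\Phi$ be a family of spherical simplices generating the reflection group $B_n$. Then there exists a unique embedding of $\Phi$ into $B_n$, up to the action of the Weyl group of $B_n$.
   Context: A family of spherical simplices in $S^{n-1}$ is the set of $2^n$ simplices cut out by $n$ hyperplanes through the origin in $\mathbb{R}^n$ with linearly independent unit normals $f_1,\dots,f_n$; it is encoded by $\pm f_1,\dots,\pm f_n$, and it generates the group generated by the reflections in the hyperplanes $f_i^\perp$. Let $\Delta(B_n)=\{\pm h_i,\ \pm h_i\pm h_j:1\le i<j\le n\}$ ($h_1,\dots,h_n$ the standard basis of $\mathbb{R}^n$) with Weyl group $W$. An embedding of $\Phi$ into $B_n$ is a realization of $\Phi$ (by an isometry) such that the normal vectors $\pm f_1,\dots,\pm f_n$, suitably normalized, are chosen from $\Delta(B_n)$. Two embeddings are considered the same if they differ by an element of $W$. *)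

theory Defs
  imports "HOL-Analysis.Analysis"
begin

definition refl_hyp :: "real^'n \<Rightarrow> real^'n \<Rightarrow> real^'n" where
  "refl_hyp v x = x - ((2 * (x \<bullet> v)) / (v \<bullet> v)) *\<^sub>R v"

text \<open>Group generated by a set of involutions (reflections): closure of the identity
  under left composition with generators (for involutive generators this is the group).\<close>
inductive_set gen_group :: "('a \<Rightarrow> 'a) set \<Rightarrow> ('a \<Rightarrow> 'a) set" for S where
  gen_id: "id \<in> gen_group S"
| gen_step: "s \<in> S \<Longrightarrow> g \<in> gen_group S \<Longrightarrow> s \<circ> g \<in> gen_group S"

definition Delta_B :: "(real^'n) set" where
  "Delta_B = {axis i 1 | i. True} \<union> {- axis i 1 | i. True} \<union>
     {s *\<^sub>R axis i 1 + t *\<^sub>R axis j 1 | i j s t.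
        i \<noteq> j \<and> s \<in> {-1, 1} \<and> t \<in> {-1, 1}}"

definition Weyl_B :: "(real^'n \<Rightarrow> real^'n) set" where
  "Weyl_B = gen_group (refl_hyp ` Delta_B)"

text \<open>A family of spherical simplices, given by n linearly independent unit normals.\<close>
definition simplex_family :: "('n \<Rightarrow> real^'n) \<Rightarrow> bool" where
  "simplex_family f \<longleftrightarrow> inj f \<and> independent (range f) \<and> (\<forall>i. norm (f i) = 1)"

definition family_group :: "('n \<Rightarrow> real^'n) \<Rightarrow> (real^'n \<Rightarrow> real^'n) set" where
  "family_group f = gen_group (refl_hyp ` range f)"

definition generates_B :: "('n \<Rightarrow> real^'n) \<Rightarrow> bool" where
  "generates_B f \<longleftrightarrow> (\<exists>T :: real^'n \<Rightarrow> real^'n. orthogonal_transformation T \<and>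
      (\<lambda>g. T \<circ> g \<circ> inv T) ` family_group f = Weyl_B)"

definition embedding_B :: "('n \<Rightarrow> real^'n) \<Rightarrow> (real^'n \<Rightarrow> real^'n) \<Rightarrow> bool" where
  "embedding_B f g \<longleftrightarrow> orthogonal_transformation g \<and>
      (\<forall>i. \<exists>c>0. c *\<^sub>R g (f i) \<in> Delta_B)"

definition realized :: "('n \<Rightarrow> real^'n) \<Rightarrow> (real^'n \<Rightarrow> real^'n) \<Rightarrow> (real^'n) set" where
  "realized f g = {g (f i) | i. True} \<union> {- g (f i) | i. True}"

end

theory Submission
  imports Defs
begin

lemma ax_nth: "axis k (1::real) $ i = (if i = k then 1 else 0)"
  by (simp add: axis_def)

lemma lin_eq_axis:
  fixes f g :: "real^'n \<Rightarrow> real^'n"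
  assumes "linear f" "linear g" "\<And>i. f (axis i 1) = g (axis i 1)"
  shows "f = g"
  using assms(1,2) by (rule linear_eq_stdbasis) (auto simp: Basis_vec_def assms(3))

definition spm :: "(real^'n \<Rightarrow> real^'n) \<Rightarrow> bool" where
  "spm h \<longleftrightarrow> linear h \<and> inj h \<and> (\<forall>k. \<exists>j. h (axis k 1) = axis j 1 \<or> h (axis k 1) = - axis j 1)"

definition rootdir :: "real^'n \<Rightarrow> bool" where
  "rootdir x \<longleftrightarrow> (\<exists>c>0. c *\<^sub>R x \<in> Delta_B)"

lemma refl_linear: "linear (refl_hyp (v::real^'n))"
  unfolding refl_hyp_def
proof (intro linearI)
  fix x y :: "real^'n" and c :: real
  show "x + y - (2 * ((x + y) \<bullet> v) / (v \<bullet> v)) *\<^sub>R v =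
    x - (2 * (x \<bullet> v) / (v \<bullet> v)) *\<^sub>R v + (y - (2 * (y \<bullet> v) / (v \<bullet> v)) *\<^sub>R v)"
    by (simp add: inner_add_left distrib_left add_divide_distrib scaleR_add_left)
  show "c *\<^sub>R x - (2 * (c *\<^sub>R x \<bullet> v) / (v \<bullet> v)) *\<^sub>R v =
    c *\<^sub>R (x - (2 * (x \<bullet> v) / (v \<bullet> v)) *\<^sub>R v)"
    by (simp add: scaleR_diff_right)
qed

lemma refl_invol:
  fixes v :: "real^'n"
  assumes "v \<noteq> 0" shows "refl_hyp v (refl_hyp v x) = x"
proof -
  define c where "c = 2 * (x \<bullet> v) / (v \<bullet> v)"
  have N: "v \<bullet> v \<noteq> 0" using assms by simp
  have "(x - c *\<^sub>R v) \<bullet> v = x \<bullet> v - c * (v \<bullet> v)" by (simp add: inner_diff_left)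
  hence "2 * ((x - c *\<^sub>R v) \<bullet> v) / (v \<bullet> v) = - c" using N by (simp add: c_def field_simps)
  thus ?thesis unfolding refl_hyp_def c_def[symmetric] by simp
qed

lemma refl_inj: "(v::real^'n) \<noteq> 0 \<Longrightarrow> inj (refl_hyp v)"
  by (metis injI refl_invol)

lemma refl_scale: "c \<noteq> 0 \<Longrightarrow> refl_hyp (c *\<^sub>R (v::real^'n)) = refl_hyp v"
  unfolding refl_hyp_def by (rule ext) (simp add: field_simps)

lemma refl_swap:
  fixes x y :: "real^'n"
  assumes "x \<bullet> x = y \<bullet> y" "x \<noteq> y"
  shows "refl_hyp (x - y) x = y"
proof -
  have d: "(x - y) \<bullet> (x - y) = 2 * (x \<bullet> x - x \<bullet> y)"
    using assms(1) by (simp add: inner_diff_left inner_diff_right inner_commute)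
  have nz: "(x - y) \<bullet> (x - y) \<noteq> 0" using assms(2) by simp
  have "x \<bullet> (x - y) = x \<bullet> x - x \<bullet> y" by (simp add: inner_diff_right)
  hence e: "2 * (x \<bullet> (x - y)) = (x - y) \<bullet> (x - y)" using d by simp
  have c1: "2 * (x \<bullet> (x - y)) / ((x - y) \<bullet> (x - y)) = 1" using nz by (simp only: e) simp
  have "refl_hyp (x - y) x = x - 1 *\<^sub>R (x - y)" unfolding refl_hyp_def c1 by (rule refl)
  thus ?thesis by simp
qed

lemma Delta_B_cases:
  assumes "r \<in> (Delta_B :: (real^'n) set)"
  shows "(\<exists>j \<sigma>. (\<sigma> = 1 \<or> \<sigma> = -1) \<and> r = \<sigma> *\<^sub>R axis j 1) \<or>
         (\<exists>a b s t. a \<noteq> b \<and> (s = 1 \<or> s = -1) \<and> (t = 1 \<or> t = -1) \<and> r = s *\<^sub>R axis a 1 + t *\<^sub>R axis b 1)"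
proof -
  have "r \<in> {axis i 1 | i. True} \<or> r \<in> {- axis i 1 | i. True} \<or>
     r \<in> {s *\<^sub>R axis i 1 + t *\<^sub>R axis j 1 | i j s t.
        i \<noteq> j \<and> s \<in> {-1, 1} \<and> t \<in> {-1, 1}}"
    using assms unfolding Delta_B_def by blast
  thus ?thesis
  proof (elim disjE)
    assume "r \<in> {axis i 1 | i. True}"
    then obtain i where "r = axis i 1" by blast
    hence "r = 1 *\<^sub>R axis i 1" by simp
    thus ?thesis by blast
  next
    assume "r \<in> {- axis i 1 | i. True}"
    then obtain i where "r = - axis i 1" by blast
    hence "r = (-1) *\<^sub>R axis i 1" by simp
    thus ?thesis by blast
  next
    assume "r \<in> {s *\<^sub>R axis i 1 + t *\<^sub>R axis j 1 | i j s t.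
        i \<noteq> j \<and> s \<in> {-1, 1} \<and> t \<in> {-1, 1}}"
    then obtain i j s t where "i \<noteq> j" "s \<in> {-1, 1}" "t \<in> {-1, 1}"
      "r = s *\<^sub>R axis i 1 + t *\<^sub>R axis j 1" by blast
    thus ?thesis by blast
  qed
qed

lemma Delta_B_short: "(\<sigma> = 1 \<or> \<sigma> = -1) \<Longrightarrow> \<sigma> *\<^sub>R axis j 1 \<in> (Delta_B :: (real^'n) set)"
  unfolding Delta_B_def by (elim disjE) auto

lemma Delta_B_long: "a \<noteq> b \<Longrightarrow> (s = 1 \<or> s = -1) \<Longrightarrow> (t = 1 \<or> t = -1) \<Longrightarrow>
   s *\<^sub>R axis a 1 + t *\<^sub>R axis b 1 \<in> (Delta_B :: (real^'n) set)"
  unfolding Delta_B_def by blast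

lemma pm1_sq: "(s::real) = 1 \<or> s = -1 \<Longrightarrow> s * s = 1" by auto

lemma refl_axis: "refl_hyp r (axis k 1) = axis k 1 - (2 * (r $ k) / (r \<bullet> r)) *\<^sub>R r"
proof -
  have "axis k 1 \<bullet> r = r $ k" by (simp add: inner_axis')
  thus ?thesis unfolding refl_hyp_def by simp
qed

lemma spm_refl:
  assumes "r \<in> (Delta_B :: (real^'n) set)"
  shows "spm (refl_hyp r)"
proof -
  have rnz: "r \<noteq> 0"
  proof
    assume "r = 0"
    from Delta_B_cases[OF assms] show False
    proof
      assume "\<exists>j \<sigma>. (\<sigma> = 1 \<or> \<sigma> = -1) \<and> r = \<sigma> *\<^sub>R axis j (1::real)"
      then obtain j \<sigma> where "\<sigma> = 1 \<or> \<sigma> = -1" "r = \<sigma> *\<^sub>R axis j (1::real)" by blast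
      hence "r $ j \<noteq> 0" by (auto simp: ax_nth)
      thus False using \<open>r = 0\<close> by simp
    next
      assume "\<exists>a b s t. a \<noteq> b \<and> (s = 1 \<or> s = -1) \<and> (t = 1 \<or> t = -1) \<and> r = s *\<^sub>R axis a 1 + t *\<^sub>R axis b (1::real)"
      then obtain a b s t where "a \<noteq> b" "s = 1 \<or> s = -1" "r = s *\<^sub>R axis a 1 + t *\<^sub>R axis b (1::real)" by blast
      hence "r $ a \<noteq> 0" by (auto simp: ax_nth)
      thus False using \<open>r = 0\<close> by simp
    qed
  qed
  have "\<exists>j. refl_hyp r (axis k 1) = axis j 1 \<or> refl_hyp r (axis k 1) = - axis j 1" for k
    using Delta_B_cases[OF assms]
  proof
    assume "\<exists>j \<sigma>. (\<sigma> = 1 \<or> \<sigma> = -1) \<and> r = \<sigma> *\<^sub>R axis j (1::real)"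
    then obtain j \<sigma> where s: "\<sigma> = 1 \<or> \<sigma> = -1" and r: "r = \<sigma> *\<^sub>R axis j (1::real)" by blast
    have rr: "r \<bullet> r = 1" using s r by (auto simp: inner_axis_axis)
    show ?thesis
    proof (cases "k = j")
      case True
      have "refl_hyp r (axis k 1) = axis k 1 - (2 * (\<sigma> * \<sigma>)) *\<^sub>R axis k 1"
        unfolding refl_axis rr using r True by (simp add: ax_nth)
      also have "\<dots> = - axis k 1" using pm1_sq[OF s] by (simp add: scaleR_2)
      finally show ?thesis by blast
    next
      case False
      have "refl_hyp r (axis k 1) = axis k 1"
        unfolding refl_axis rr using r False by (simp add: ax_nth)
      thus ?thesis by blast
    qed
  next
    assume "\<exists>a b s t. a \<noteq> b \<and> (s = 1 \<or> s = -1) \<and> (t = 1 \<or> t = -1) \<and> r = s *\<^sub>R axis a 1 + t *\<^sub>R axis b (1::real)"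
    then obtain a b s t where ab: "a \<noteq> b" and s: "s = 1 \<or> s = -1" and t: "t = 1 \<or> t = -1"
      and r: "r = s *\<^sub>R axis a 1 + t *\<^sub>R axis b (1::real)" by blast
    have rr: "r \<bullet> r = 2" using s t ab r
      by (auto simp: inner_axis_axis inner_add_left inner_add_right)
    show ?thesis
    proof (cases "k = a")
      case True
      have "refl_hyp r (axis k 1) = axis a 1 - s *\<^sub>R (s *\<^sub>R axis a 1 + t *\<^sub>R axis b 1)"
        unfolding refl_axis rr using r True ab by (simp add: ax_nth)
      also have "\<dots> = - ((s * t) *\<^sub>R axis b 1)" using pm1_sq[OF s] by (simp add: algebra_simps)
      finally show ?thesis using s t by auto
    next
      case False
      show ?thesis
      proof (cases "k = b")
        case True
        have "refl_hyp r (axis k 1) = axis b 1 - t *\<^sub>R (s *\<^sub>R axis a 1 + t *\<^sub>R axis b 1)"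
          unfolding refl_axis rr using r True ab by (simp add: ax_nth)
        also have "\<dots> = - ((s * t) *\<^sub>R axis a 1)" using pm1_sq[OF t] by (simp add: algebra_simps)
        finally show ?thesis using s t by auto
      next
        case False
        have "refl_hyp r (axis k 1) = axis k 1"
          unfolding refl_axis using r False \<open>k \<noteq> a\<close> by (simp add: ax_nth)
        thus ?thesis by blast
      qed
    qed
  qed
  thus ?thesis unfolding spm_def using refl_linear refl_inj[OF rnz] by blast
qed

lemma spm_comp:
  assumes "spm a" "spm b" shows "spm (a \<circ> b)"
proof -
  have la: "linear a" and lb: "linear b" using assms unfolding spm_def by auto
  have "\<exists>j. (a \<circ> b) (axis k 1) = axis j 1 \<or> (a \<circ> b) (axis k 1) = - axis j 1" for k
  proof -
    obtain j where j: "b (axis k 1) = axis j 1 \<or> b (axis k 1) = - axis j 1"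
      using assms(2) unfolding spm_def by blast
    obtain m where m: "a (axis j 1) = axis m 1 \<or> a (axis j 1) = - axis m 1"
      using assms(1) unfolding spm_def by blast
    have "a (- axis j 1) = - a (axis j 1)" using linear_neg[OF la] by blast
    thus ?thesis using j m by auto
  qed
  thus ?thesis using assms unfolding spm_def by (auto intro: linear_compose inj_compose)
qed

lemma spm_id: "spm (id :: real^'n \<Rightarrow> real^'n)"
  unfolding spm_def by (auto simp: linear_id)

lemma Weyl_spm: "w \<in> Weyl_B \<Longrightarrow> spm w"
  unfolding Weyl_B_def
proof (induction rule: gen_group.induct)
  case gen_id then show ?case by (rule spm_id)
next
  case (gen_step s g)
  then show ?case using spm_refl spm_comp by blast
qed

lemma gen_mono: "g \<in> gen_group S \<Longrightarrow> S \<subseteq> S' \<Longrightarrow> g \<in> gen_group S'"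
  by (induction rule: gen_group.induct) (auto intro: gen_group.intros)

lemma gen_comp: "a \<in> gen_group S \<Longrightarrow> b \<in> gen_group S \<Longrightarrow> a \<circ> b \<in> gen_group S"
  by (induction rule: gen_group.induct) (auto simp: o_assoc[symmetric] intro: gen_group.intros)

lemma refl_in_Weyl: "r \<in> Delta_B \<Longrightarrow> refl_hyp r \<in> Weyl_B"
  unfolding Weyl_B_def using gen_step[OF _ gen_id, of "refl_hyp r"] by auto

lemma axis_eq_pm:
  assumes "axis k (1::real) = \<sigma> *\<^sub>R axis l 1" "\<sigma> = 1 \<or> \<sigma> = -1"
  shows "k = l"
proof (rule ccontr)
  assume "k \<noteq> l"
  have "axis k (1::real) $ k = (\<sigma> *\<^sub>R axis l 1) $ k" using assms(1) by simp
  thus False using \<open>k \<noteq> l\<close> by (simp add: ax_nth)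
qed

lemma spm_Weyl: "spm h \<Longrightarrow> h \<in> Weyl_B"
proof (induction "card {k. h (axis k 1) \<noteq> axis k 1}" arbitrary: h rule: less_induct)
  case less
  have lin: "linear h" and inj: "inj h" using less.prems unfolding spm_def by auto
  show ?case
  proof (cases "{k. h (axis k 1) \<noteq> axis k 1} = {}")
    case True
    hence "h = id" using lin_eq_axis[OF lin linear_id] by auto
    thus ?thesis unfolding Weyl_B_def by (simp add: gen_id)
  next
    case False
    then obtain k where hk: "h (axis k 1) \<noteq> axis k 1" by blast
    obtain j where j: "h (axis k 1) = axis j 1 \<or> h (axis k 1) = - axis j 1"
      using less.prems unfolding spm_def by blast
    define x where "x = h (axis k 1)"
    define v where "v = x - axis k 1"
    define r where "r = refl_hyp v"
    obtain \<sigma> :: real where sig: "\<sigma> = 1 \<or> \<sigma> = -1" and xs: "x = \<sigma> *\<^sub>R axis j 1"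
      using j unfolding x_def by (metis scaleR_one scaleR_minus1_left)
    have xx: "x \<bullet> x = axis k 1 \<bullet> axis k (1::real)"
      using sig xs by (auto simp: inner_axis_axis)
    have rx: "r x = axis k 1" unfolding r_def v_def
      by (rule refl_swap[OF xx]) (use hk x_def in simp)
    have vnz: "v \<noteq> 0" using hk unfolding v_def x_def by simp
    have rgen: "\<exists>d\<in>Delta_B. r = refl_hyp d"
    proof (cases "j = k")
      case True
      hence "x = - axis k 1" using j hk x_def by auto
      hence "v = (-2) *\<^sub>R axis k 1" unfolding v_def by (simp add: scaleR_2)
      hence "r = refl_hyp (1 *\<^sub>R axis k 1)" unfolding r_def using refl_scale[of "-2" "axis k 1"] by simp
      thus ?thesis using Delta_B_short[of 1 k] by blast
    next
      case False
      have "v = \<sigma> *\<^sub>R axis j 1 + (-1) *\<^sub>R axis k 1" unfolding v_def xs by simp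
      thus ?thesis unfolding r_def using Delta_B_long[OF False sig, of "-1"] by blast
    qed
    then obtain d where d: "d \<in> Delta_B" "r = refl_hyp d" by blast
    have rspm: "spm r" using spm_refl[OF d(1)] d(2) by simp
    define h' where "h' = r \<circ> h"
    have h'spm: "spm h'" unfolding h'_def by (rule spm_comp[OF rspm less.prems])
    have hr: "h = r \<circ> h'" unfolding h'_def r_def using refl_invol[OF vnz] by (auto simp: fun_eq_iff)
    have sub: "{k. h' (axis k 1) \<noteq> axis k 1} \<subset> {k. h (axis k 1) \<noteq> axis k 1}"
    proof
      show "{k. h' (axis k 1) \<noteq> axis k 1} \<subseteq> {k. h (axis k 1) \<noteq> axis k 1}"
      proof (rule subsetI, rule ccontr)
        fix l assume l1: "l \<in> {k. h' (axis k 1) \<noteq> axis k 1}" and l2: "l \<notin> {k. h (axis k 1) \<noteq> axis k 1}"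
        hence hl: "h (axis l 1) = axis l 1" by simp
        have lk: "l \<noteq> k" using hl hk by auto
        have jl: "j \<noteq> l"
        proof
          assume "j = l"
          hence "h (axis k 1) = h (\<sigma> *\<^sub>R axis l 1)" using xs x_def hl linear_scale[OF lin] by simp
          hence "axis k 1 = \<sigma> *\<^sub>R axis l (1::real)" using inj by (simp add: inj_eq)
          thus False using axis_eq_pm sig lk by blast
        qed
        have "v $ l = 0" unfolding v_def xs using jl lk by (simp add: ax_nth)
        hence "r (axis l 1) = axis l 1" unfolding r_def refl_axis by simp
        hence "h' (axis l 1) = axis l 1" unfolding h'_def using hl by simp
        thus False using l1 by simp
      qed
      have "h' (axis k 1) = axis k 1" unfolding h'_def using rx x_def by simp
      thus "{k. h' (axis k 1) \<noteq> axis k 1} \<noteq> {k. h (axis k 1) \<noteq> axis k 1}" using hk by blast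
    qed
    have "card {k. h' (axis k 1) \<noteq> axis k 1} < card {k. h (axis k 1) \<noteq> axis k 1}"
      by (rule psubset_card_mono[OF _ sub]) simp
    hence "h' \<in> Weyl_B" using less.hyps h'spm by blast
    moreover have "r \<in> refl_hyp ` Delta_B" using d by blast
    ultimately have "r \<circ> h' \<in> Weyl_B" unfolding Weyl_B_def by (blast intro: gen_step)
    thus ?thesis using hr by simp
  qed
qed

lemma finite_spm: "finite {h :: real^'n \<Rightarrow> real^'n. spm h}"
proof -
  define B :: "(real^'n) set" where "B = range (\<lambda>j. axis j 1) \<union> range (\<lambda>j. - axis j 1)"
  have fB: "finite B" unfolding B_def by simp
  have fF: "finite (PiE UNIV (\<lambda>_::'n. B))" by (rule finite_PiE) (auto simp: fB)
  have inj: "inj_on (\<lambda>h k. h (axis k 1)) {h :: real^'n \<Rightarrow> real^'n. spm h}"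
  proof (rule inj_onI)
    fix g h :: "real^'n \<Rightarrow> real^'n"
    assume "g \<in> {h. spm h}" "h \<in> {h. spm h}" "(\<lambda>k. g (axis k 1)) = (\<lambda>k. h (axis k 1))"
    hence "linear g" "linear h" "\<And>k. g (axis k 1) = h (axis k 1)" unfolding spm_def by (auto simp: fun_eq_iff)
    thus "g = h" by (rule lin_eq_axis)
  qed
  have "(\<lambda>h k. h (axis k 1)) ` {h :: real^'n \<Rightarrow> real^'n. spm h} \<subseteq> PiE UNIV (\<lambda>_. B)"
  proof
    fix \<phi> assume "\<phi> \<in> (\<lambda>h k. h (axis k 1)) ` {h :: real^'n \<Rightarrow> real^'n. spm h}"
    then obtain h where h: "spm h" "\<phi> = (\<lambda>k. h (axis k 1))" by blast
    have "\<phi> k \<in> B" for k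
    proof -
      obtain j where "h (axis k 1) = axis j 1 \<or> h (axis k 1) = - axis j 1" using h(1) unfolding spm_def by blast
      thus ?thesis unfolding B_def h(2) by auto
    qed
    thus "\<phi> \<in> PiE UNIV (\<lambda>_. B)" by (simp add: PiE_iff)
  qed
  hence "finite ((\<lambda>h k. h (axis k 1)) ` {h :: real^'n \<Rightarrow> real^'n. spm h})"
    using fF finite_subset by blast
  thus ?thesis using finite_imageD[OF _ inj] by blast
qed

lemma finite_Weyl: "finite (Weyl_B :: (real^'n \<Rightarrow> real^'n) set)"
  by (rule finite_subset[OF _ finite_spm]) (auto intro: Weyl_spm)

lemma sgn_div: "(x::real) \<noteq> 0 \<Longrightarrow> x / \<bar>x\<bar> = 1 \<or> x / \<bar>x\<bar> = -1"
  by (cases "x > 0") auto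

lemma refl_rootdir:
  fixes u :: "real^'n"
  assumes "u \<noteq> 0" "spm (refl_hyp u)"
  shows "rootdir u"
proof -
  obtain k where uk: "u $ k \<noteq> 0" using assms(1) by (metis vec_eq_iff zero_index)
  define N where "N = u \<bullet> u"
  have Npos: "N > 0" unfolding N_def using assms(1) by simp
  define w where "w = refl_hyp u (axis k 1)"
  have w: "w = axis k 1 - (2 * (u $ k) / N) *\<^sub>R u" unfolding w_def N_def by (rule refl_axis)
  obtain j where "w = axis j 1 \<or> w = - axis j 1" using assms(2) unfolding spm_def w_def by blast
  then obtain \<sigma> :: real where sig: "\<sigma> = 1 \<or> \<sigma> = -1" and ws: "w = \<sigma> *\<^sub>R axis j 1"
    by (metis scaleR_one scaleR_minus1_left)
  have wi: "w $ i = (if i = k then 1 else 0) - (2 * (u $ k) / N) * u $ i" for i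
    unfolding w by (simp add: ax_nth)
  have wi2: "w $ i = (if i = j then \<sigma> else 0)" for i
    unfolding ws by (simp add: ax_nth)
  have cnz: "2 * (u $ k) / N \<noteq> 0" using uk Npos by simp
  show ?thesis
  proof (cases "j = k")
    case True
    have "u $ i = 0" if "i \<noteq> k" for i
      using wi[of i] wi2[of i] that True cnz by simp
    hence ueq: "u = (u $ k) *\<^sub>R axis k 1"
      by (auto simp: vec_eq_iff ax_nth)
    define c where "c = 1 / \<bar>u $ k\<bar>"
    have "c *\<^sub>R u = (u $ k / \<bar>u $ k\<bar>) *\<^sub>R axis k 1"
      by (subst ueq) (simp add: c_def)
    moreover have "c > 0" unfolding c_def using uk by simp
    ultimately show ?thesis unfolding rootdir_def using Delta_B_short[OF sgn_div[OF uk]] by metis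
  next
    case False
    have "w $ k = 0" using wi2[of k] False by simp
    hence Nk: "N = 2 * (u $ k)^2" using wi[of k] Npos by (simp add: field_simps power2_eq_square)
    have "u $ i = 0" if "i \<noteq> k" "i \<noteq> j" for i
      using wi[of i] wi2[of i] that cnz by simp
    hence ueq: "u = (u $ k) *\<^sub>R axis k 1 + (u $ j) *\<^sub>R axis j 1"
      using False by (auto simp: vec_eq_iff ax_nth)
    have "N = (u $ k)^2 + (u $ j)^2"
      unfolding N_def by (subst (1 2) ueq) (simp add: inner_add_left inner_add_right inner_axis_axis False[symmetric] power2_eq_square False)
    hence sq: "(u $ j)^2 = (u $ k)^2" using Nk by simp
    hence abseq: "\<bar>u $ j\<bar> = \<bar>u $ k\<bar>" by (metis abs_of_nonneg power2_eq_iff_nonneg abs_ge_zero power2_abs)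
    hence uj: "u $ j \<noteq> 0" using uk by auto
    define c where "c = 1 / \<bar>u $ k\<bar>"
    have "c *\<^sub>R u = (u $ k / \<bar>u $ k\<bar>) *\<^sub>R axis k 1 + (u $ j / \<bar>u $ j\<bar>) *\<^sub>R axis j 1"
      by (subst ueq) (simp add: c_def abseq scaleR_add_right)
    moreover have "c > 0" unfolding c_def using uk by simp
    ultimately show ?thesis unfolding rootdir_def
      using Delta_B_long[OF False[symmetric] sgn_div[OF uk] sgn_div[OF uj]] by metis
  qed
qed

lemma conj_refl:
  fixes T :: "real^'n \<Rightarrow> real^'n"
  assumes T: "orthogonal_transformation T"
  shows "T \<circ> refl_hyp v \<circ> inv T = refl_hyp (T v)"
proof (rule ext)
  fix y
  have lin: "linear T" and ip: "\<And>a b. T a \<bullet> T b = a \<bullet> b" using T unfolding orthogonal_transformation_def by auto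
  have b: "bij T" using orthogonal_transformation_bij[OF T] .
  have Ty: "T (inv T y) = y" using b by (simp add: bij_is_surj surj_f_inv_f)
  have "T (refl_hyp v (inv T y)) = T (inv T y) - (2 * (inv T y \<bullet> v) / (v \<bullet> v)) *\<^sub>R T v"
    unfolding refl_hyp_def using lin by (simp add: linear_diff linear_scale)
  also have "\<dots> = y - (2 * (y \<bullet> T v) / (T v \<bullet> T v)) *\<^sub>R T v"
    using ip[of "inv T y" v] ip[of v v] Ty by simp
  finally show "(T \<circ> refl_hyp v \<circ> inv T) y = refl_hyp (T v) y" unfolding refl_hyp_def by simp
qed

lemma conj_gen:
  assumes b: "bij T"
  shows "g \<in> gen_group S \<Longrightarrow> T \<circ> g \<circ> inv T \<in> gen_group ((\<lambda>s. T \<circ> s \<circ> inv T) ` S)"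
proof (induction rule: gen_group.induct)
  case gen_id
  have "T \<circ> id \<circ> inv T = id" using b by (auto simp: fun_eq_iff bij_is_surj surj_f_inv_f)
  thus ?case by (metis gen_group.gen_id)
next
  case (gen_step s g)
  have eq: "T \<circ> (s \<circ> g) \<circ> inv T = (T \<circ> s \<circ> inv T) \<circ> (T \<circ> g \<circ> inv T)"
    using b by (auto simp: fun_eq_iff bij_is_inj inv_f_f)
  have m: "T \<circ> s \<circ> inv T \<in> (\<lambda>s. T \<circ> s \<circ> inv T) ` S" using gen_step(1) by blast
  show ?case unfolding eq by (rule gen_group.gen_step[OF m gen_step.IH])
qed

lemma conj_inj:
  assumes b: "bij T"
  shows "inj (\<lambda>g. T \<circ> g \<circ> inv T)"
proof (rule injI)
  fix g h assume e: "T \<circ> g \<circ> inv T = T \<circ> h \<circ> inv T"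
  show "g = h"
  proof
    fix x
    have "T (g (inv T (T x))) = T (h (inv T (T x)))" using e by (metis comp_apply)
    thus "g x = h x" using b by (simp add: bij_is_inj inv_f_f inj_eq)
  qed
qed

lemma gen_comm_gen:
  assumes "\<forall>s\<in>S. \<forall>t\<in>S. s \<circ> t = t \<circ> s" and s: "s \<in> S"
  shows "b \<in> gen_group S \<Longrightarrow> s \<circ> b = b \<circ> s"
proof (induction rule: gen_group.induct)
  case gen_id thus ?case by simp
next
  case (gen_step t g)
  have st: "s \<circ> t = t \<circ> s" using assms s gen_step(1) by blast
  have "s \<circ> (t \<circ> g) = (s \<circ> t) \<circ> g" by (simp only: o_assoc)
  also have "\<dots> = (t \<circ> s) \<circ> g" by (simp only: st)
  also have "\<dots> = t \<circ> (s \<circ> g)" by (simp only: o_assoc)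
  also have "\<dots> = t \<circ> (g \<circ> s)" by (simp only: gen_step.IH)
  also have "\<dots> = (t \<circ> g) \<circ> s" by (simp only: o_assoc)
  finally show ?case .
qed

lemma gen_comm:
  assumes "\<forall>s\<in>S. \<forall>t\<in>S. s \<circ> t = t \<circ> s" and b: "b \<in> gen_group S"
  shows "a \<in> gen_group S \<Longrightarrow> a \<circ> b = b \<circ> a"
proof (induction rule: gen_group.induct)
  case gen_id thus ?case by simp
next
  case (gen_step t g)
  have tb: "t \<circ> b = b \<circ> t" using gen_comm_gen[OF assms(1) gen_step(1) b] .
  have "(t \<circ> g) \<circ> b = t \<circ> (g \<circ> b)" by (simp only: o_assoc)
  also have "\<dots> = t \<circ> (b \<circ> g)" by (simp only: gen_step.IH)
  also have "\<dots> = (t \<circ> b) \<circ> g" by (simp only: o_assoc)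
  also have "\<dots> = (b \<circ> t) \<circ> g" by (simp only: tb)
  also have "\<dots> = b \<circ> (t \<circ> g)" by (simp only: o_assoc)
  finally show ?case .
qed

lemma refl_orth_comm:
  fixes u v :: "real^'n"
  assumes "u \<bullet> v = 0"
  shows "refl_hyp u \<circ> refl_hyp v = refl_hyp v \<circ> refl_hyp u"
proof
  fix x
  have vu: "v \<bullet> u = 0" using assms by (simp add: inner_commute)
  show "(refl_hyp u \<circ> refl_hyp v) x = (refl_hyp v \<circ> refl_hyp u) x"
    unfolding refl_hyp_def comp_apply
    by (simp add: inner_diff_left assms vu algebra_simps)
qed

lemma three_orth:
  fixes a1 b1 a2 b2 a3 b3 :: real
  assumes "a1^2 = 1/2" "b1^2 = 1/2" "a2^2 = 1/2" "b2^2 = 1/2" "a3^2 = 1/2" "b3^2 = 1/2"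
    "a1*a2 + b1*b2 = 0" "a1*a3 + b1*b3 = 0" "a2*a3 + b2*b3 = 0"
  shows False
proof -
  have e12: "(a1*b1)*(a2*b2) = -1/4"
  proof -
    have "(a1*b1)*(a2*b2) = (a1*a2)*(b1*b2)" by simp
    also have "\<dots> = -((b1*b2)*(b1*b2))" proof -
      have h: "a1*a2 = -(b1*b2)" using assms(7) by linarith
      show ?thesis by (simp only: h mult_minus_left)
    qed
    also have "\<dots> = -(b1^2*b2^2)" by (simp add: power2_eq_square)
    finally show ?thesis using assms by simp
  qed
  have e13: "(a1*b1)*(a3*b3) = -1/4"
  proof -
    have "(a1*b1)*(a3*b3) = (a1*a3)*(b1*b3)" by simp
    also have "\<dots> = -((b1*b3)*(b1*b3))" proof -
      have h: "a1*a3 = -(b1*b3)" using assms(8) by linarith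
      show ?thesis by (simp only: h mult_minus_left)
    qed
    also have "\<dots> = -(b1^2*b3^2)" by (simp add: power2_eq_square)
    finally show ?thesis using assms by simp
  qed
  have e23: "(a2*b2)*(a3*b3) = -1/4"
  proof -
    have "(a2*b2)*(a3*b3) = (a2*a3)*(b2*b3)" by simp
    also have "\<dots> = -((b2*b3)*(b2*b3))" proof -
      have h: "a2*a3 = -(b2*b3)" using assms(9) by linarith
      show ?thesis by (simp only: h mult_minus_left)
    qed
    also have "\<dots> = -(b2^2*b3^2)" by (simp add: power2_eq_square)
    finally show ?thesis using assms by simp
  qed
  have "((a1*b1)*(a2*b2)*(a3*b3))^2 = ((a1*b1)*(a2*b2))*((a1*b1)*(a3*b3))*((a2*b2)*(a3*b3))"
    by (simp add: power2_eq_square)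
  also have "\<dots> = -1/64" using e12 e13 e23 by simp
  finally have "((a1*b1)*(a2*b2)*(a3*b3))^2 = -1/64" .
  thus False using zero_le_power2[of "(a1*b1)*(a2*b2)*(a3*b3)"] by linarith
qed

lemma rootdir_form:
  fixes x :: "real^'n"
  assumes "rootdir x"
  shows "\<exists>d>0. (\<exists>j \<sigma>. (\<sigma> = 1 \<or> \<sigma> = -1) \<and> x = (\<sigma> * d) *\<^sub>R axis j 1) \<or>
     (\<exists>a b s t. a \<noteq> b \<and> (s = 1 \<or> s = -1) \<and> (t = 1 \<or> t = -1) \<and>
        x = (s * d) *\<^sub>R axis a 1 + (t * d) *\<^sub>R axis b 1)"
proof -
  obtain c where c: "c > 0" "c *\<^sub>R x \<in> Delta_B" using assms unfolding rootdir_def by blast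
  have xe: "x = (1/c) *\<^sub>R (c *\<^sub>R x)" using c(1) by simp
  have d: "1/c > 0" using c(1) by simp
  from Delta_B_cases[OF c(2)] show ?thesis
  proof
    assume "\<exists>j \<sigma>. (\<sigma> = 1 \<or> \<sigma> = -1) \<and> c *\<^sub>R x = \<sigma> *\<^sub>R axis j 1"
    then obtain j \<sigma> where "\<sigma> = 1 \<or> \<sigma> = -1" "c *\<^sub>R x = \<sigma> *\<^sub>R axis j 1" by blast
    hence "(\<sigma> = 1 \<or> \<sigma> = -1) \<and> x = (\<sigma> * (1/c)) *\<^sub>R axis j 1" using xe by (metis scaleR_scaleR mult.commute)
    thus ?thesis using d by blast
  next
    assume "\<exists>a b s t. a \<noteq> b \<and> (s = 1 \<or> s = -1) \<and> (t = 1 \<or> t = -1) \<and> c *\<^sub>R x = s *\<^sub>R axis a 1 + t *\<^sub>R axis b 1"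
    then obtain a b s t where h: "a \<noteq> b" "s = 1 \<or> s = -1" "t = 1 \<or> t = -1"
      "c *\<^sub>R x = s *\<^sub>R axis a 1 + t *\<^sub>R axis b 1" by blast
    hence "x = (s * (1/c)) *\<^sub>R axis a 1 + (t * (1/c)) *\<^sub>R axis b 1" using xe
      by (simp add: scaleR_add_right)
    thus ?thesis using d h(1-3) by blast
  qed
qed

lemma unit_root:
  fixes x :: "real^'n"
  assumes "rootdir x" "x \<bullet> x = 1"
  shows "(\<exists>j. x = axis j 1 \<or> x = - axis j 1) \<or>
    (\<exists>a b. a \<noteq> b \<and> (x $ a)^2 = 1/2 \<and> (x $ b)^2 = 1/2 \<and> (\<forall>i. i \<noteq> a \<longrightarrow> i \<noteq> b \<longrightarrow> x $ i = 0))"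
proof -
  obtain d where d: "d > 0" and cases: "(\<exists>j \<sigma>. (\<sigma> = 1 \<or> \<sigma> = -1) \<and> x = (\<sigma> * d) *\<^sub>R axis j 1) \<or>
     (\<exists>a b s t. a \<noteq> b \<and> (s = 1 \<or> s = -1) \<and> (t = 1 \<or> t = -1) \<and>
        x = (s * d) *\<^sub>R axis a 1 + (t * d) *\<^sub>R axis b 1)" using rootdir_form[OF assms(1)] by blast
  from cases show ?thesis
  proof
    assume "\<exists>j \<sigma>. (\<sigma> = 1 \<or> \<sigma> = -1) \<and> x = (\<sigma> * d) *\<^sub>R axis j 1"
    then obtain j \<sigma> where s: "\<sigma> = 1 \<or> \<sigma> = -1" and x: "x = (\<sigma> * d) *\<^sub>R axis j 1" by blast
    have "x \<bullet> x = d * d" using s unfolding x by (auto simp: inner_axis_axis)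
    hence "d = 1" using assms(2) d by (metis mult_cancel_left1 mult_le_cancel_left1 nle_le less_eq_real_def mult_less_cancel_left1 not_less_iff_gr_or_eq)
    thus ?thesis using s x by auto
  next
    assume "\<exists>a b s t. a \<noteq> b \<and> (s = 1 \<or> s = -1) \<and> (t = 1 \<or> t = -1) \<and>
        x = (s * d) *\<^sub>R axis a 1 + (t * d) *\<^sub>R axis b 1"
    then obtain a b s t where ab: "a \<noteq> b" and s: "s = 1 \<or> s = -1" and t: "t = 1 \<or> t = -1"
      and x: "x = (s * d) *\<^sub>R axis a 1 + (t * d) *\<^sub>R axis b 1" by blast
    have "x \<bullet> x = 2 * (d * d)" using s t ab unfolding x
      by (auto simp: inner_axis_axis inner_add_left inner_add_right)
    hence dd: "d^2 = 1/2" using assms(2) by (simp add: power2_eq_square)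
    have "(x $ a)^2 = 1/2" using ab s dd unfolding x by (auto simp: ax_nth power2_eq_square)
    moreover have "(x $ b)^2 = 1/2" using ab t dd unfolding x by (auto simp: ax_nth power2_eq_square)
    moreover have "\<forall>i. i \<noteq> a \<longrightarrow> i \<noteq> b \<longrightarrow> x $ i = 0" unfolding x by (simp add: ax_nth)
    ultimately show ?thesis using ab by blast
  qed
qed

lemma root2:
  fixes x :: "real^'n"
  assumes "rootdir x" "x \<bullet> x = 2"
  shows "(x $ i)^2 = 0 \<or> (x $ i)^2 = 1 \<or> (x $ i)^2 = 2"
proof -
  obtain d where d: "d > 0" and cases: "(\<exists>j \<sigma>. (\<sigma> = 1 \<or> \<sigma> = -1) \<and> x = (\<sigma> * d) *\<^sub>R axis j 1) \<or>
     (\<exists>a b s t. a \<noteq> b \<and> (s = 1 \<or> s = -1) \<and> (t = 1 \<or> t = -1) \<and>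
        x = (s * d) *\<^sub>R axis a 1 + (t * d) *\<^sub>R axis b 1)" using rootdir_form[OF assms(1)] by blast
  from cases show ?thesis
  proof
    assume "\<exists>j \<sigma>. (\<sigma> = 1 \<or> \<sigma> = -1) \<and> x = (\<sigma> * d) *\<^sub>R axis j 1"
    then obtain j \<sigma> where s: "\<sigma> = 1 \<or> \<sigma> = -1" and x: "x = (\<sigma> * d) *\<^sub>R axis j 1" by blast
    have "x \<bullet> x = d * d" using s unfolding x by (auto simp: inner_axis_axis)
    hence "d * d = 2" using assms(2) by simp
    thus ?thesis using s unfolding x by (auto simp: ax_nth power2_eq_square)
  next
    assume "\<exists>a b s t. a \<noteq> b \<and> (s = 1 \<or> s = -1) \<and> (t = 1 \<or> t = -1) \<and>
        x = (s * d) *\<^sub>R axis a 1 + (t * d) *\<^sub>R axis b 1"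
    then obtain a b s t where ab: "a \<noteq> b" and s: "s = 1 \<or> s = -1" and t: "t = 1 \<or> t = -1"
      and x: "x = (s * d) *\<^sub>R axis a 1 + (t * d) *\<^sub>R axis b 1" by blast
    have "x \<bullet> x = 2 * (d * d)" using s t ab unfolding x
      by (auto simp: inner_axis_axis inner_add_left inner_add_right)
    hence "d * d = 1" using assms(2) by simp
    thus ?thesis using s t ab unfolding x by (auto simp: ax_nth power2_eq_square)
  qed
qed

lemma inner2:
  fixes y z :: "real^'n"
  assumes "a \<noteq> b" "\<forall>i. i \<noteq> a \<longrightarrow> i \<noteq> b \<longrightarrow> y $ i = 0"
  shows "y \<bullet> z = y $ a * z $ a + y $ b * z $ b"
proof -
  have "y = (y $ a) *\<^sub>R axis a 1 + (y $ b) *\<^sub>R axis b 1"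
    using assms by (auto simp: vec_eq_iff ax_nth)
  hence "y \<bullet> z = ((y $ a) *\<^sub>R axis a 1 + (y $ b) *\<^sub>R axis b 1) \<bullet> z" by simp
  also have "\<dots> = y $ a * z $ a + y $ b * z $ b" by (simp add: inner_add_left inner_axis')
  finally show ?thesis .
qed

lemma three_elems:
  assumes "CARD('n) \<ge> 3"
  shows "\<exists>l m. l \<noteq> (k::'n) \<and> m \<noteq> k \<and> l \<noteq> m"
proof -
  have "\<not> UNIV \<subseteq> {k}"
  proof
    assume "UNIV \<subseteq> {k}" hence "CARD('n) \<le> card {k}" by (intro card_mono) auto
    thus False using assms by simp
  qed
  then obtain l where l: "l \<noteq> k" by blast
  have "\<not> UNIV \<subseteq> {k, l}"
  proof
    assume "UNIV \<subseteq> {k, l}" hence "CARD('n) \<le> card {k, l}" by (intro card_mono) auto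
    also have "\<dots> \<le> 2" by (simp add: card_insert_le_m1)
    finally show False using assms by simp
  qed
  then obtain m where "m \<notin> {k, l}" by blast
  thus ?thesis using l by blast
qed

lemma allshort:
  fixes P :: "'n \<Rightarrow> real^'n"
  assumes n2: "CARD('n) \<noteq> 2"
    and unit: "\<And>k. P k \<bullet> P k = 1" "\<And>k. rootdir (P k)"
    and orth: "\<And>k l. k \<noteq> l \<Longrightarrow> P k \<bullet> P l = 0" "\<And>k l. k \<noteq> l \<Longrightarrow> rootdir (P k + P l)"
  shows "\<exists>j. P k = axis j 1 \<or> P k = - axis j 1"
proof (rule ccontr)
  assume ns: "\<not> ?thesis"
  then obtain a b where ab: "a \<noteq> b" and ka: "(P k $ a)^2 = 1/2" and kb: "(P k $ b)^2 = 1/2"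
    and k0: "\<forall>i. i \<noteq> a \<longrightarrow> i \<noteq> b \<longrightarrow> P k $ i = 0"
    using unit_root[OF unit(2) unit(1)] by blast
  have ksq: "(P k $ i)^2 = 0 \<or> (P k $ i)^2 = 1/2" for i
    using ka kb k0 by (cases "i = a \<or> i = b") auto
  have claim: "(P l $ a)^2 = 1/2 \<and> (P l $ b)^2 = 1/2 \<and> (\<forall>i. i \<noteq> a \<longrightarrow> i \<noteq> b \<longrightarrow> P l $ i = 0)"
    if lk: "l \<noteq> k" for l
  proof -
    have kl: "k \<noteq> l" using lk by simp
    define x where "x = P k + P l"
    have "x \<bullet> x = P k \<bullet> P k + 2 * (P k \<bullet> P l) + P l \<bullet> P l"
      unfolding x_def by (simp add: inner_add_left inner_add_right inner_commute)
    hence xx: "x \<bullet> x = 2" using unit(1)[of k] unit(1)[of l] orth(1)[OF kl] by simp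
    have r2: "(x $ i)^2 = 0 \<or> (x $ i)^2 = 1 \<or> (x $ i)^2 = 2" for i
      using root2[OF _ xx] orth(2)[OF kl] unfolding x_def by blast
    have xi: "x $ i = P k $ i + P l $ i" for i unfolding x_def by simp
    from unit_root[OF unit(2) unit(1), of l] show ?thesis
    proof
      assume "\<exists>j. P l = axis j 1 \<or> P l = - axis j 1"
      then obtain j where j: "P l = axis j 1 \<or> P l = - axis j 1" by blast
      have "P k \<bullet> P l = 0" using orth(1)[OF kl] .
      hence "P k $ j = 0" using j by (auto simp: inner_axis)
      hence "j \<noteq> a" using ka by auto
      hence "x $ a = P k $ a" using j xi[of a] by (auto simp: ax_nth)
      hence False using r2[of a] ka by simp
      thus ?thesis ..
    next
      assume "\<exists>c d. c \<noteq> d \<and> (P l $ c)^2 = 1/2 \<and> (P l $ d)^2 = 1/2 \<and> (\<forall>i. i \<noteq> c \<longrightarrow> i \<noteq> d \<longrightarrow> P l $ i = 0)"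
      then obtain c d where "c \<noteq> d" "(P l $ c)^2 = 1/2" "(P l $ d)^2 = 1/2"
        "\<forall>i. i \<noteq> c \<longrightarrow> i \<noteq> d \<longrightarrow> P l $ i = 0" by blast
      hence lsq: "(P l $ i)^2 = 0 \<or> (P l $ i)^2 = 1/2" for i
        by (cases "i = c \<or> i = d") auto
      have key: "P k $ i = 0 \<longleftrightarrow> P l $ i = 0" for i
      proof
        assume "P k $ i = 0"
        thus "P l $ i = 0" using r2[of i] lsq[of i] xi[of i] by auto
      next
        assume "P l $ i = 0"
        thus "P k $ i = 0" using r2[of i] ksq[of i] xi[of i] by auto
      qed
      have "P l $ a \<noteq> 0" using key[of a] ka by auto
      hence la: "(P l $ a)^2 = 1/2" using lsq[of a] by auto
      have "P l $ b \<noteq> 0" using key[of b] kb by auto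
      hence lb: "(P l $ b)^2 = 1/2" using lsq[of b] by auto
      show ?thesis using la lb key k0 by blast
    qed
  qed
  have "card {a, b} \<le> CARD('n)" by (intro card_mono) auto
  moreover have "card {a, b} = 2" using ab by simp
  ultimately have "CARD('n) \<ge> 3" using n2 by linarith
  then obtain l m where lm: "l \<noteq> k" "m \<noteq> k" "l \<noteq> m" using three_elems[of k] by blast
  have cl: "(P l $ a)^2 = 1/2" "(P l $ b)^2 = 1/2" "\<forall>i. i \<noteq> a \<longrightarrow> i \<noteq> b \<longrightarrow> P l $ i = 0"
    using claim[OF lm(1)] by auto
  have cm: "(P m $ a)^2 = 1/2" "(P m $ b)^2 = 1/2"
    using claim[OF lm(2)] by auto
  have o1: "P k $ a * P l $ a + P k $ b * P l $ b = 0"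
    using inner2[OF ab k0, of "P l"] orth(1)[of k l] lm by simp
  have o2: "P k $ a * P m $ a + P k $ b * P m $ b = 0"
    using inner2[OF ab k0, of "P m"] orth(1)[of k m] lm by simp
  have o3: "P l $ a * P m $ a + P l $ b * P m $ b = 0"
    using inner2[OF ab cl(3), of "P m"] orth(1)[of l m] lm by simp
  show False using three_orth[OF ka kb cl(1,2) cm o1 o2 o3] .
qed

definition short2 :: "real^'n \<Rightarrow> bool" where
  "short2 x \<longleftrightarrow> (\<exists>j \<sigma>. (\<sigma> = 1 \<or> \<sigma> = -1) \<and> x = \<sigma> *\<^sub>R axis j 1)"
definition long2 :: "real^'n \<Rightarrow> bool" where
  "long2 x \<longleftrightarrow> (\<forall>i. (x $ i)^2 = 1/2)"

lemma sq1: "(x::real)^2 = 1 \<Longrightarrow> x = 1 \<or> x = -1"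
  by (simp add: power2_eq_1_iff)

lemma unit_root2:
  fixes x :: "real^'n" and p q :: 'n
  assumes "rootdir x" "x \<bullet> x = 1" "UNIV = {p, q}" "p \<noteq> q"
  shows "short2 x \<or> long2 x"
proof -
  from unit_root[OF assms(1,2)] show ?thesis
  proof
    assume "\<exists>j. x = axis j 1 \<or> x = - axis j 1"
    hence "short2 x" unfolding short2_def by (metis scaleR_one scaleR_minus1_left)
    thus ?thesis ..
  next
    assume "\<exists>a b. a \<noteq> b \<and> (x $ a)^2 = 1/2 \<and> (x $ b)^2 = 1/2 \<and> (\<forall>i. i \<noteq> a \<longrightarrow> i \<noteq> b \<longrightarrow> x $ i = 0)"
    then obtain a b where ab: "a \<noteq> b" "(x $ a)^2 = 1/2" "(x $ b)^2 = 1/2" by blast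
    have "i = a \<or> i = b" for i
    proof -
      have "i \<in> {p, q}" "a \<in> {p, q}" "b \<in> {p, q}" using assms(3) by auto
      thus ?thesis using ab(1) by auto
    qed
    hence "long2 x" unfolding long2_def using ab by metis
    thus ?thesis ..
  qed
qed

lemma inner_pq:
  fixes x y :: "real^'n" and p q :: 'n
  assumes "UNIV = {p, q}" "p \<noteq> q"
  shows "x \<bullet> y = x $ p * y $ p + x $ q * y $ q"
proof -
  have "\<forall>i. i \<noteq> p \<longrightarrow> i \<noteq> q \<longrightarrow> x $ i = 0" using assms(1) by auto
  thus ?thesis using inner2[OF assms(2)] by blast
qed

lemma class2:
  fixes u v :: "real^'n" and p q :: 'n
  assumes pq: "UNIV = {p, q}" "p \<noteq> q"
    and u: "rootdir u" "u \<bullet> u = 1" and v: "rootdir v" "v \<bullet> v = 1"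
    and uv: "u \<bullet> v \<noteq> 0" "v \<noteq> u" "v \<noteq> - u"
  shows "(short2 u \<and> long2 v) \<or> (long2 u \<and> short2 v)"
proof -
  have nss: "\<not> (short2 u \<and> short2 v)"
  proof
    assume "short2 u \<and> short2 v"
    then obtain i \<sigma> j \<tau> where s: "\<sigma> = 1 \<or> \<sigma> = -1" "u = \<sigma> *\<^sub>R axis i 1"
      and t: "\<tau> = 1 \<or> \<tau> = -1" "v = \<tau> *\<^sub>R axis j 1" unfolding short2_def by blast
    have "i = j" using uv(1) unfolding s(2) t(2) by (auto simp: inner_axis_axis split: if_splits)
    thus False using s t uv(2,3) by auto
  qed
  have nll: "\<not> (long2 u \<and> long2 v)"
  proof
    assume "long2 u \<and> long2 v"
    hence lu: "\<And>i. (u $ i)^2 = 1/2" and lv: "\<And>i. (v $ i)^2 = 1/2" unfolding long2_def by auto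
    have ip: "u \<bullet> v = u $ p * v $ p + u $ q * v $ q" by (rule inner_pq[OF pq])
    have sqp: "(u $ p * v $ p)^2 = 1/4" by (simp only: power_mult_distrib lu lv) (simp?)
    have sqq: "(u $ q * v $ q)^2 = 1/4" by (simp only: power_mult_distrib lu lv) (simp?)
    have "(u $ q * v $ q)^2 = (u $ p * v $ p)^2" using sqp sqq by simp
    hence "u $ q * v $ q = u $ p * v $ p \<or> u $ q * v $ q = - (u $ p * v $ p)"
      by (simp add: power2_eq_iff)
    hence eqq: "u $ q * v $ q = u $ p * v $ p" using uv(1) ip by auto
    define \<kappa> where "\<kappa> = 2 * (u $ p * v $ p)"
    have k2: "\<kappa>^2 = 1" unfolding \<kappa>_def using sqp by (simp add: power_mult_distrib)
    have vi: "v $ i = \<kappa> * u $ i" for i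
    proof -
      have "i = p \<or> i = q" using pq(1) by auto
      hence "u $ i * v $ i = u $ p * v $ p" using eqq by auto
      hence "\<kappa> * u $ i = 2 * (u $ i)^2 * v $ i" unfolding \<kappa>_def by (simp add: power2_eq_square algebra_simps)
      thus ?thesis using lu[of i] by simp
    qed
    hence "v = \<kappa> *\<^sub>R u" by (simp add: vec_eq_iff)
    thus False using sq1[OF k2] uv(2,3) by auto
  qed
  show ?thesis using unit_root2[OF u pq] unit_root2[OF v pq] nss nll by blast
qed

lemma other_elem:
  fixes p q i :: 'n
  assumes "UNIV = {p, q}" "p \<noteq> q"
  shows "\<exists>j. j \<noteq> i \<and> (\<forall>k. k = i \<or> k = j)"
proof -
  have "i = p \<or> i = q" using assms(1) by auto
  thus ?thesis
  proof
    assume "i = p" thus ?thesis using assms by (intro exI[of _ q]) auto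
  next
    assume "i = q" thus ?thesis using assms by (intro exI[of _ p]) auto
  qed
qed

lemma map2:
  fixes s l s' l' :: "real^'n" and p q :: 'n
  assumes pq: "UNIV = {p, q}" "p \<noteq> q"
    and s: "short2 s" and l: "long2 l" and s': "short2 s'" and l': "long2 l'"
  shows "\<exists>w. spm w \<and> w s = s' \<and> (w l = l' \<or> w l = - l')"
proof -
  obtain i \<sigma> where sig: "\<sigma> = 1 \<or> \<sigma> = -1" and sd: "s = \<sigma> *\<^sub>R axis i 1" using s unfolding short2_def by blast
  obtain i' \<sigma>' where sig': "\<sigma>' = 1 \<or> \<sigma>' = -1" and sd': "s' = \<sigma>' *\<^sub>R axis i' 1" using s' unfolding short2_def by blast
  obtain j where j: "j \<noteq> i" "\<And>k. k = i \<or> k = j" using other_elem[OF pq, of i] by blast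
  obtain j' where j': "j' \<noteq> i'" "\<And>k. k = i' \<or> k = j'" using other_elem[OF pq, of i'] by blast
  have li: "\<And>k. (l $ k)^2 = 1/2" and li': "\<And>k. (l' $ k)^2 = 1/2" using l l' unfolding long2_def by auto
  define \<kappa> where "\<kappa> = 2 * \<sigma> * \<sigma>' * (l $ i) * (l' $ i')"
  define \<epsilon> where "\<epsilon> = 2 * \<kappa> * (l' $ j') * (l $ j)"
  have ss: "\<sigma> * \<sigma> = 1" "\<sigma>' * \<sigma>' = 1" using sig sig' by auto
  have k2: "\<kappa>^2 = 1"
  proof -
    have "\<kappa>^2 = 4 * (\<sigma> * \<sigma>) * (\<sigma>' * \<sigma>') * (l $ i)^2 * (l' $ i')^2"
      unfolding \<kappa>_def by (simp add: power2_eq_square)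
    thus ?thesis using ss li li' by simp
  qed
  have e2: "\<epsilon>^2 = 1"
  proof -
    have "\<epsilon>^2 = 4 * \<kappa>^2 * (l' $ j')^2 * (l $ j)^2"
      unfolding \<epsilon>_def by (simp add: power2_eq_square)
    thus ?thesis using k2 li li' by simp
  qed
  define c where "c = \<sigma> * \<sigma>'"
  have c2: "c = 1 \<or> c = -1" unfolding c_def using sig sig' by auto
  have e1: "\<epsilon> = 1 \<or> \<epsilon> = -1" using sq1[OF e2] .
  define w where "w x = (c * x $ i) *\<^sub>R axis i' 1 + (\<epsilon> * x $ j) *\<^sub>R axis j' (1::real)" for x :: "real^'n"
  have wc: "w x $ k = (if k = i' then c * x $ i else \<epsilon> * x $ j)" for x k
    unfolding w_def using j' by (auto simp: ax_nth)
  have lin: "linear w"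
    by (intro linearI) (simp_all add: w_def algebra_simps scaleR_add_left)
  have inj: "inj w"
  proof (rule injI)
    fix x y assume e: "w x = w y"
    have "x $ i = y $ i" using arg_cong[OF e, of "\<lambda>z. z $ i'"] c2 by (auto simp: wc)
    moreover have "x $ j = y $ j" using arg_cong[OF e, of "\<lambda>z. z $ j'"] e1 j'(1) by (auto simp: wc)
    ultimately have "x $ k = y $ k" for k using j(2)[of k] by auto
    thus "x = y" by (simp add: vec_eq_iff)
  qed
  have bas: "\<exists>m. w (axis k 1) = axis m 1 \<or> w (axis k 1) = - axis m 1" for k
  proof -
    have "k = i \<or> k = j" using j(2) .
    thus ?thesis
    proof
      assume "k = i"
      hence "w (axis k 1) = c *\<^sub>R axis i' 1" unfolding w_def using j(1) by (simp add: ax_nth)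
      thus ?thesis using c2 by auto
    next
      assume "k = j"
      hence "w (axis k 1) = \<epsilon> *\<^sub>R axis j' 1" unfolding w_def using j(1) by (simp add: ax_nth)
      thus ?thesis using e1 by auto
    qed
  qed
  have spm: "spm w" unfolding spm_def using lin inj bas by blast
  have ws: "w s = s'"
  proof -
    have "w s = (c * \<sigma>) *\<^sub>R axis i' 1" unfolding w_def sd using j(1) by (simp add: ax_nth)
    also have "c * \<sigma> = \<sigma>'" unfolding c_def using ss by (metis mult.commute mult.left_commute mult_1_right)
    finally show ?thesis using sd' by simp
  qed
  have wl: "w l = \<kappa> *\<^sub>R l'"
  proof -
    have "w l $ k = (\<kappa> *\<^sub>R l') $ k" for k
    proof -
      have "k = i' \<or> k = j'" using j'(2) .
      thus ?thesis
      proof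
        assume k: "k = i'"
        have "\<kappa> * l' $ i' = c * l $ i * (2 * (l' $ i')^2)" unfolding \<kappa>_def c_def by (simp add: power2_eq_square)
        thus ?thesis using k li' wc by simp
      next
        assume k: "k = j'"
        have "\<epsilon> * l $ j = \<kappa> * l' $ j' * (2 * (l $ j)^2)" unfolding \<epsilon>_def by (simp add: power2_eq_square)
        thus ?thesis using k li wc j'(1) by simp
      qed
    qed
    thus ?thesis by (simp add: vec_eq_iff)
  qed
  have "w l = l' \<or> w l = - l'" using sq1[OF k2] wl by auto
  thus ?thesis using spm ws by blast
qed

lemma orth_inner: "orthogonal_transformation g \<Longrightarrow> g x \<bullet> g y = x \<bullet> y"
  unfolding orthogonal_transformation_def by blast

lemma orth_lin: "orthogonal_transformation g \<Longrightarrow> linear g"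
  unfolding orthogonal_transformation_def by blast

lemma Delta_B_nz: "r \<in> (Delta_B :: (real^'n) set) \<Longrightarrow> r \<noteq> 0"
proof
  assume r: "r \<in> Delta_B" and z: "r = 0"
  from Delta_B_cases[OF r] show False
  proof
    assume "\<exists>j \<sigma>. (\<sigma> = 1 \<or> \<sigma> = -1) \<and> r = \<sigma> *\<^sub>R axis j (1::real)"
    then obtain j \<sigma> where "\<sigma> = 1 \<or> \<sigma> = -1" "r = \<sigma> *\<^sub>R axis j (1::real)" by blast
    hence "r $ j \<noteq> 0" by (auto simp: ax_nth)
    thus False using z by simp
  next
    assume "\<exists>a b s t. a \<noteq> b \<and> (s = 1 \<or> s = -1) \<and> (t = 1 \<or> t = -1) \<and> r = s *\<^sub>R axis a 1 + t *\<^sub>R axis b (1::real)"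
    then obtain a b s t where "a \<noteq> b" "s = 1 \<or> s = -1" "r = s *\<^sub>R axis a 1 + t *\<^sub>R axis b (1::real)" by blast
    hence "r $ a \<noteq> 0" by (auto simp: ax_nth)
    thus False using z by simp
  qed
qed

lemma family_gen: "refl_hyp (f i) \<in> family_group f"
proof -
  have "refl_hyp (f i) \<circ> id \<in> family_group f"
    unfolding family_group_def by (rule gen_step) (auto intro: gen_id)
  thus ?thesis by simp
qed

lemma conj_image_Weyl:
  fixes f :: "'n \<Rightarrow> real^'n" and g :: "real^'n \<Rightarrow> real^'n"
  assumes g: "orthogonal_transformation g" and e: "\<forall>i. rootdir (g (f i))"
  shows "(\<lambda>\<phi>. g \<circ> \<phi> \<circ> inv g) ` family_group f \<subseteq> Weyl_B"
proof
  fix \<psi> assume "\<psi> \<in> (\<lambda>\<phi>. g \<circ> \<phi> \<circ> inv g) ` family_group f"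
  then obtain \<phi> where \<phi>: "\<phi> \<in> family_group f" "\<psi> = g \<circ> \<phi> \<circ> inv g" by blast
  have b: "bij g" by (rule orthogonal_transformation_bij[OF g])
  have "\<psi> \<in> gen_group ((\<lambda>s. g \<circ> s \<circ> inv g) ` (refl_hyp ` range f))"
    using conj_gen[OF b] \<phi> unfolding family_group_def by blast
  moreover have "(\<lambda>s. g \<circ> s \<circ> inv g) ` (refl_hyp ` range f) \<subseteq> refl_hyp ` Delta_B"
  proof
    fix t assume "t \<in> (\<lambda>s. g \<circ> s \<circ> inv g) ` (refl_hyp ` range f)"
    then obtain i where t: "t = g \<circ> refl_hyp (f i) \<circ> inv g" by blast
    obtain c where c: "c > 0" "c *\<^sub>R g (f i) \<in> Delta_B" using e unfolding rootdir_def by blast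
    have "t = refl_hyp (g (f i))" unfolding t by (rule conj_refl[OF g])
    also have "\<dots> = refl_hyp (c *\<^sub>R g (f i))" using refl_scale[of c "g (f i)"] c(1) by simp
    finally show "t \<in> refl_hyp ` Delta_B" using c(2) by blast
  qed
  ultimately show "\<psi> \<in> Weyl_B" unfolding Weyl_B_def by (rule gen_mono)
qed

lemma conj_image_eq:
  fixes f :: "'n \<Rightarrow> real^'n" and g T :: "real^'n \<Rightarrow> real^'n"
  assumes T: "orthogonal_transformation T" and TW: "(\<lambda>\<phi>. T \<circ> \<phi> \<circ> inv T) ` family_group f = Weyl_B"
    and g: "orthogonal_transformation g" and e: "\<forall>i. rootdir (g (f i))"
  shows "(\<lambda>\<phi>. g \<circ> \<phi> \<circ> inv g) ` family_group f = Weyl_B"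
proof -
  have fW: "finite (Weyl_B :: (real^'n \<Rightarrow> real^'n) set)" by (rule finite_Weyl)
  have iT: "inj_on (\<lambda>\<phi>. T \<circ> \<phi> \<circ> inv T) (family_group f)"
    using conj_inj[OF orthogonal_transformation_bij[OF T]] by (simp add: inj_on_def inj_def)
  have ig: "inj_on (\<lambda>\<phi>. g \<circ> \<phi> \<circ> inv g) (family_group f)"
    using conj_inj[OF orthogonal_transformation_bij[OF g]] by (simp add: inj_on_def inj_def)
  have fG: "finite (family_group f)" using finite_imageD[OF _ iT] fW TW by simp
  have "card (family_group f) = card (Weyl_B :: (real^'n \<Rightarrow> real^'n) set)"
    using card_image[OF iT] TW by simp
  hence "card ((\<lambda>\<phi>. g \<circ> \<phi> \<circ> inv g) ` family_group f) = card (Weyl_B :: (real^'n \<Rightarrow> real^'n) set)"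
    using card_image[OF ig] by simp
  thus ?thesis using card_subset_eq[OF fW conj_image_Weyl[OF g e]] by simp
qed

theorem corollary2:
  fixes f :: "'n \<Rightarrow> real^'n"
  assumes "simplex_family f" and "generates_B f"
  shows "(\<exists>g. embedding_B f g) \<and>
         (\<forall>g1 g2. embedding_B f g1 \<and> embedding_B f g2 \<longrightarrow>
            (\<exists>w\<in>Weyl_B. w ` realized f g1 = realized f g2))"
proof -
  obtain T :: "real^'n \<Rightarrow> real^'n" where T: "orthogonal_transformation T"
    and TW: "(\<lambda>g. T \<circ> g \<circ> inv T) ` family_group f = Weyl_B"
    using assms(2) unfolding generates_B_def by blast
  have injf: "inj f" and indep: "independent (range f)" and nf: "\<And>i. norm (f i) = 1"
    using assms(1) unfolding simplex_family_def by auto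
  have ff: "f i \<bullet> f i = 1" for i using nf[of i] by (metis power2_norm_eq_inner power_one)
  have emb: "orthogonal_transformation g \<and> (\<forall>i. rootdir (g (f i)))" if "embedding_B f g" for g
    using that unfolding embedding_B_def rootdir_def by blast
  have ex: "embedding_B f T"
  proof -
    have "rootdir (T (f i))" for i
    proof -
      have "refl_hyp (T (f i)) = T \<circ> refl_hyp (f i) \<circ> inv T" by (rule conj_refl[OF T, symmetric])
      also have "\<dots> \<in> Weyl_B" using TW family_gen[of f i] by blast
      finally have "spm (refl_hyp (T (f i)))" by (rule Weyl_spm)
      moreover have "T (f i) \<noteq> 0"
      proof
        assume "T (f i) = 0"
        hence "T (f i) \<bullet> T (f i) = 0" by simp
        thus False using orth_inner[OF T] ff[of i] by simp
      qed
      ultimately show ?thesis using refl_rootdir by blast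
    qed
    thus ?thesis using T unfolding embedding_B_def rootdir_def by blast
  qed
  have uniq: "\<exists>w\<in>Weyl_B. w ` realized f g1 = realized f g2"
    if e1: "embedding_B f g1" and e2: "embedding_B f g2" for g1 g2
  proof -
    have g1: "orthogonal_transformation g1" and r1: "\<forall>i. rootdir (g1 (f i))" using emb[OF e1] by auto
    have g2: "orthogonal_transformation g2" and r2: "\<forall>i. rootdir (g2 (f i))" using emb[OF e2] by auto
    have C1: "(\<lambda>\<phi>. g1 \<circ> \<phi> \<circ> inv g1) ` family_group f = Weyl_B" by (rule conj_image_eq[OF T TW g1 r1])
    have C2: "(\<lambda>\<phi>. g2 \<circ> \<phi> \<circ> inv g2) ` family_group f = Weyl_B" by (rule conj_image_eq[OF T TW g2 r2])
    have b1: "bij g1" and b2: "bij g2" using g1 g2 orthogonal_transformation_bij by auto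
    show ?thesis
    proof (cases "CARD('n) = 2")
      case False
      define h where "h = g2 \<circ> inv g1"
      have h: "orthogonal_transformation h" unfolding h_def
        by (intro orthogonal_transformation_compose g2 orthogonal_transformation_inv g1)
      have invh: "inv h = g1 \<circ> inv g2" unfolding h_def
        using o_inv_distrib[OF b2 bij_imp_bij_inv[OF b1]] inv_inv_eq[OF b1] by simp
      have hroot: "rootdir (h r)" if r: "r \<in> Delta_B" for r
      proof -
        have "refl_hyp r \<in> Weyl_B" by (rule refl_in_Weyl[OF r])
        then obtain \<phi> where \<phi>: "\<phi> \<in> family_group f" "refl_hyp r = g1 \<circ> \<phi> \<circ> inv g1"
          using C1 by blast
        have "refl_hyp (h r) = h \<circ> refl_hyp r \<circ> inv h" by (rule conj_refl[OF h, symmetric])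
        also have "\<dots> = h \<circ> (g1 \<circ> \<phi> \<circ> inv g1) \<circ> (g1 \<circ> inv g2)" by (simp only: invh \<phi>(2))
        also have "\<dots> = g2 \<circ> \<phi> \<circ> inv g2" unfolding h_def
          using b1 by (auto simp: fun_eq_iff bij_is_inj inv_f_f)
        also have "\<dots> \<in> Weyl_B" using C2 \<phi>(1) by blast
        finally have "spm (refl_hyp (h r))" by (rule Weyl_spm)
        moreover have "h r \<noteq> 0"
        proof
          assume "h r = 0"
          hence "h r \<bullet> h r = 0" by simp
          thus False using orth_inner[OF h] Delta_B_nz[OF r] by simp
        qed
        ultimately show ?thesis using refl_rootdir by blast
      qed
      define P where "P k = h (axis k 1)" for k
      have "\<exists>j. P k = axis j 1 \<or> P k = - axis j 1" for k
      proof (rule allshort[OF False])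
        show "P k \<bullet> P k = 1" for k unfolding P_def using orth_inner[OF h] by (simp add: inner_axis_axis)
        show "rootdir (P k)" for k unfolding P_def using hroot Delta_B_short[of 1 k] by simp
        show "P k \<bullet> P l = 0" if "k \<noteq> l" for k l
          unfolding P_def using orth_inner[OF h] that by (simp add: inner_axis_axis)
        show "rootdir (P k + P l)" if "k \<noteq> l" for k l
        proof -
          have "P k + P l = h (1 *\<^sub>R axis k 1 + 1 *\<^sub>R axis l 1)"
            unfolding P_def using linear_add[OF orth_lin[OF h]] by simp
          thus ?thesis using hroot Delta_B_long[OF that, of 1 1] by simp
        qed
      qed
      hence "spm h" unfolding spm_def P_def
        using orth_lin[OF h] bij_is_inj[OF orthogonal_transformation_bij[OF h]] by blast
      hence hW: "h \<in> Weyl_B" by (rule spm_Weyl)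
      have hg: "h (g1 (f i)) = g2 (f i)" for i unfolding h_def using b1 by (simp add: bij_is_inj inv_f_f)
      have hneg: "h (- x) = - h x" for x using linear_neg[OF orth_lin[OF h]] .
      have "h ` realized f g1 = realized f g2"
      proof
        show "h ` realized f g1 \<subseteq> realized f g2"
          unfolding realized_def using hg hneg by auto
        show "realized f g2 \<subseteq> h ` realized f g1"
        proof
          fix y assume "y \<in> realized f g2"
          then obtain i where "y = g2 (f i) \<or> y = - g2 (f i)" unfolding realized_def by blast
          thus "y \<in> h ` realized f g1"
          proof
            assume "y = g2 (f i)"
            hence "y = h (g1 (f i))" using hg by simp
            moreover have "g1 (f i) \<in> realized f g1" unfolding realized_def by blast
            ultimately show ?thesis by blast
          next
            assume "y = - g2 (f i)"
            hence "y = h (- g1 (f i))" using hg hneg by simp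
            moreover have "- g1 (f i) \<in> realized f g1" unfolding realized_def by blast
            ultimately show ?thesis by blast
          qed
        qed
      qed
      thus ?thesis using hW by blast
    next
      case True
      then obtain p q :: 'n where pq: "UNIV = {p, q}" "p \<noteq> q" by (metis card_2_iff)
      have ip: "i = p \<or> i = q" for i :: 'n using pq(1) by auto
      have nonorth: "f p \<bullet> f q \<noteq> 0"
      proof
        assume o: "f p \<bullet> f q = 0"
        have comm: "\<forall>s\<in>refl_hyp ` range f. \<forall>t\<in>refl_hyp ` range f. s \<circ> t = t \<circ> s"
        proof (intro ballI)
          fix s t assume "s \<in> refl_hyp ` range f" "t \<in> refl_hyp ` range f"
          then obtain i j where st: "s = refl_hyp (f i)" "t = refl_hyp (f j)" by blast
          show "s \<circ> t = t \<circ> s"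
          proof (cases "i = j")
            case True thus ?thesis using st by simp
          next
            case False
            hence "f i \<bullet> f j = 0" using o ip[of i] ip[of j] by (auto simp: inner_commute)
            thus ?thesis using st refl_orth_comm by blast
          qed
        qed
        have Wc: "w1 \<circ> w2 = w2 \<circ> w1" if "w1 \<in> Weyl_B" "w2 \<in> Weyl_B" for w1 w2 :: "real^'n \<Rightarrow> real^'n"
        proof -
          have "w1 \<in> (\<lambda>g. T \<circ> g \<circ> inv T) ` family_group f" using that(1) TW by simp
          then obtain a where a: "a \<in> family_group f" "w1 = T \<circ> a \<circ> inv T" by (elim imageE) simp
          have "w2 \<in> (\<lambda>g. T \<circ> g \<circ> inv T) ` family_group f" using that(2) TW by simp
          then obtain b where b: "b \<in> family_group f" "w2 = T \<circ> b \<circ> inv T" by (elim imageE) simp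
          note ab = a(1) b(1) a(2) b(2)
          have abc: "a \<circ> b = b \<circ> a" using gen_comm[OF comm] ab(1,2) unfolding family_group_def by blast
          have bT: "bij T" by (rule orthogonal_transformation_bij[OF T])
          have "w1 \<circ> w2 = T \<circ> (a \<circ> b) \<circ> inv T" unfolding ab(3,4)
            using bT by (auto simp: fun_eq_iff bij_is_inj inv_f_f)
          also have "\<dots> = T \<circ> (b \<circ> a) \<circ> inv T" using abc by simp
          also have "\<dots> = w2 \<circ> w1" unfolding ab(3,4)
            using bT by (auto simp: fun_eq_iff bij_is_inj inv_f_f)
          finally show ?thesis .
        qed
        define R1 where "R1 = refl_hyp (axis p 1 :: real^'n)"
        define R2 where "R2 = refl_hyp (axis p 1 + axis q 1 :: real^'n)"
        have R1W: "R1 \<in> Weyl_B" unfolding R1_def using refl_in_Weyl[OF Delta_B_short[of 1 p]] by simp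
        have R2W: "R2 \<in> Weyl_B" unfolding R2_def using refl_in_Weyl[OF Delta_B_long[OF pq(2), of 1 1]] by simp
        have n2: "(axis p 1 + axis q 1) \<bullet> (axis p 1 + axis q (1::real)) = (2::real)"
          using pq(2) by (simp add: inner_add_left inner_add_right inner_axis_axis)
        have R2p: "R2 (axis p 1) = - axis q 1"
          unfolding R2_def refl_axis n2 using pq(2) by (simp add: ax_nth)
        have R1p: "R1 (axis p 1) = - axis p 1"
          unfolding R1_def refl_axis by (simp add: ax_nth inner_axis_axis scaleR_2)
        have R1q: "R1 (axis q 1) = axis q 1"
          unfolding R1_def refl_axis using pq(2) by (simp add: ax_nth)
        have "(R1 \<circ> R2) (axis p 1) = - axis q 1"
          using R2p R1q linear_neg[OF refl_linear, of "axis p 1" "axis q 1"] unfolding R1_def by simp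
        moreover have "(R2 \<circ> R1) (axis p 1) = axis q 1"
          using R1p R2p linear_neg[OF refl_linear, of "axis p 1 + axis q 1" "axis p 1"] unfolding R2_def by simp
        ultimately have "- axis q 1 = (axis q 1 :: real^'n)" using Wc[OF R1W R2W] by metis
        hence "(- axis q 1 :: real^'n) $ q = axis q 1 $ q" by (rule arg_cong[where f="\<lambda>x. x $ q"])
        thus False by (simp add: ax_nth)
      qed
      have conf: "\<exists>s l. short2 s \<and> long2 l \<and> realized f g = {s, l, -s, -l}"
        if e: "embedding_B f g" for g
      proof -
        have g: "orthogonal_transformation g" and r: "\<forall>i. rootdir (g (f i))" using emb[OF e] by auto
        define u where "u = g (f p)"
        define v where "v = g (f q)"
        have uu: "u \<bullet> u = 1" and vv: "v \<bullet> v = 1" unfolding u_def v_def using orth_inner[OF g] ff by auto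
        have ru: "rootdir u" and rv: "rootdir v" unfolding u_def v_def using r by auto
        have uv: "u \<bullet> v \<noteq> 0" unfolding u_def v_def using orth_inner[OF g] nonorth by simp
        have ig: "inj g" using bij_is_inj[OF orthogonal_transformation_bij[OF g]] .
        have vu: "v \<noteq> u" unfolding u_def v_def using ig injf pq(2) by (auto simp: inj_eq)
        have vmu: "v \<noteq> - u"
        proof
          assume "v = - u"
          hence "g (f q) = g (- f p)" unfolding u_def v_def using linear_neg[OF orth_lin[OF g]] by simp
          hence fq: "f q = - f p" using ig by (simp add: inj_eq)
          have "f p \<noteq> f q" using injf pq(2) by (auto simp: inj_eq)
          hence "f p \<in> range f - {f q}" by blast
          hence "f q \<in> span (range f - {f q})" unfolding fq by (intro span_neg span_base)
          hence "dependent (range f)" unfolding dependent_def by blast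
          thus False using indep by simp
        qed
        have A: "{g (f i) | i. True} = {u, v}"
        proof
          show "{g (f i) | i. True} \<subseteq> {u, v}"
          proof
            fix y assume "y \<in> {g (f i) | i. True}"
            then obtain i where "y = g (f i)" by blast
            thus "y \<in> {u, v}" using ip[of i] unfolding u_def v_def by auto
          qed
          show "{u, v} \<subseteq> {g (f i) | i. True}" unfolding u_def v_def by blast
        qed
        have B: "{- g (f i) | i. True} = {-u, -v}"
        proof
          show "{- g (f i) | i. True} \<subseteq> {-u, -v}"
          proof
            fix y assume "y \<in> {- g (f i) | i. True}"
            then obtain i where "y = - g (f i)" by blast
            thus "y \<in> {-u, -v}" using ip[of i] unfolding u_def v_def by auto
          qed
          show "{-u, -v} \<subseteq> {- g (f i) | i. True}" unfolding u_def v_def by blast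
        qed
        have real: "realized f g = {u, v, -u, -v}"
          unfolding realized_def A B by auto
        from class2[OF pq ru uu rv vv uv vu vmu] show ?thesis
        proof
          assume "short2 u \<and> long2 v"
          thus ?thesis using real by blast
        next
          assume "long2 u \<and> short2 v"
          moreover have "realized f g = {v, u, -v, -u}" using real by auto
          ultimately show ?thesis by blast
        qed
      qed
      obtain s1 l1 where c1: "short2 s1" "long2 l1" "realized f g1 = {s1, l1, -s1, -l1}" using conf[OF e1] by blast
      obtain s2 l2 where c2: "short2 s2" "long2 l2" "realized f g2 = {s2, l2, -s2, -l2}" using conf[OF e2] by blast
      obtain w where w: "spm w" "w s1 = s2" "w l1 = l2 \<or> w l1 = - l2" using map2[OF pq c1(1,2) c2(1,2)] by blast
      have wW: "w \<in> Weyl_B" by (rule spm_Weyl[OF w(1)])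
      have wneg: "w (- x) = - w x" for x using linear_neg[of w] w(1) unfolding spm_def by blast
      have "w ` {s1, l1, -s1, -l1} = {s2, l2, -s2, -l2}"
        using w(2,3) wneg by auto
      thus ?thesis using wW c1(3) c2(3) by auto
    qed
  qed
  show ?thesis using ex uniq by blast
qed


end
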